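(* Let $0<r'<r<1$ and let $K\subseteq\mathbb{R}$ be compact. Then there is $c>0$ such that $K\subseteq\theta_{r'}(\mathbb{Z}((T))_{r,\le c})$, where $\theta_{r'}\big(\sum a_nT^n\big)=\sum a_n(r')^n$.
   Context: $\mathbb{Z}((T))_{r,\le c}$ is the set of integer Laurent series $\sum_{n\gg-\infty}a_nT^n$ ($a_n\in\mathbb{Z}$, $a_n=0$ for $n$ sufficiently negative) with $\sum|a_n|r^n\le c$. *)

theory Defs
  imports "HOL-Analysis.Analysis"
begin

text \<open>An integer Laurent series sum a_n T^n is represented by its coefficient
  function a :: int => int, with a_n = 0 for n sufficiently negative.\<close>

definition int_laurent :: "(int \<Rightarrow> int) \<Rightarrow> bool" where
  "int_laurent a \<longleftrightarrow> (\<exists>N. \<forall>n<N. a n = 0)"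

definition ZLaurent_ball :: "real \<Rightarrow> real \<Rightarrow> (int \<Rightarrow> int) set" where
  "ZLaurent_ball r c = {a. int_laurent a \<and>
     (\<lambda>n. real_of_int \<bar>a n\<bar> * r powi n) summable_on UNIV \<and>
     (\<Sum>\<^sub>\<infinity>n. real_of_int \<bar>a n\<bar> * r powi n) \<le> c}"

definition theta :: "real \<Rightarrow> (int \<Rightarrow> int) \<Rightarrow> real" where
  "theta r' a = (\<Sum>\<^sub>\<infinity>n. real_of_int (a n) * r' powi n)"

end

theory Submission
  imports Defs
begin

lemma has_sum_int_from_nat:
  fixes f :: "int \<Rightarrow> real"
  assumes "\<And>n. n < 0 \<Longrightarrow> f n = 0" "((\<lambda>k. f (int k)) has_sum s) UNIV"
  shows "(f has_sum s) UNIV"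
proof -
  have "(f has_sum s) (range int)" using has_sum_reindex[of int UNIV f s] assms(2)
    by (simp add: o_def)
  moreover have "(f has_sum s) UNIV \<longleftrightarrow> (f has_sum s) (range int)"
  proof (rule has_sum_cong_neutral)
    fix x assume "x \<in> UNIV - range int"
    then have "x < 0" by (metis Diff_iff UNIV_I nonneg_int_cases not_less rangeI)
    then show "f x = 0" using assms(1) by simp
  qed auto
  ultimately show ?thesis by simp
qed

primrec rem :: "real \<Rightarrow> real \<Rightarrow> nat \<Rightarrow> real" where
  "rem q y 0 = y"
| "rem q y (Suc n) = rem q y n / q - of_int \<lfloor>rem q y n / q\<rfloor>"

definition dig :: "real \<Rightarrow> real \<Rightarrow> nat \<Rightarrow> int" where
  "dig q x k = (if k = 0 then \<lfloor>x\<rfloor> else \<lfloor>rem q (x - of_int \<lfloor>x\<rfloor>) (k - 1) / q\<rfloor>)"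

lemma rem_bounds: "0 \<le> y \<Longrightarrow> y < 1 \<Longrightarrow> 0 \<le> rem q y n \<and> rem q y n < 1"
  by (induction n) (auto simp: floor_less_cancel)

lemma dig_expand:
  assumes "0 < q"
  shows "(\<Sum>k<Suc n. of_int (dig q x k) * q ^ k) + q ^ n * rem q (x - of_int \<lfloor>x\<rfloor>) n = x"
proof (induction n)
  case 0 then show ?case by (simp add: dig_def)
next
  case (Suc n)
  let ?r = "rem q (x - of_int \<lfloor>x\<rfloor>)"
  have e: "?r n = q * of_int \<lfloor>?r n / q\<rfloor> + q * ?r (Suc n)"
    using assms by (simp add: field_simps)
  have "q ^ n * ?r n = of_int (dig q x (Suc n)) * q ^ Suc n + q ^ Suc n * ?r (Suc n)"
    by (subst e) (simp add: dig_def algebra_simps)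
  then show ?case using Suc by simp
qed

lemma dig_bound:
  assumes "0 < q" "k > 0"
  shows "0 \<le> dig q x k \<and> of_int (dig q x k) \<le> 1 / q"
proof -
  let ?y = "x - of_int \<lfloor>x\<rfloor>"
  have "0 \<le> ?y" "?y < 1" by linarith+
  then have b: "0 \<le> rem q ?y (k-1)" "rem q ?y (k-1) < 1" using rem_bounds by blast+
  have "0 \<le> rem q ?y (k-1) / q" using b assms by simp
  moreover have "rem q ?y (k-1) / q \<le> 1 / q" using b assms by (simp add: divide_right_mono)
  ultimately show ?thesis using assms by (simp add: dig_def) linarith
qed


theorem mainTheorem14:
  fixes r r' :: real and K :: "real set"
  assumes "0 < r'" and "r' < r" and "r < 1" and "compact K"
  shows "\<exists>c>0. K \<subseteq> theta r' ` ZLaurent_ball r c"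
proof -
  obtain M0 where M0: "\<forall>x\<in>K. norm x \<le> M0"
    using compact_imp_bounded[OF assms(4)] bounded_iff by blast
  define M where "M = max M0 0"
  have M: "\<And>x. x \<in> K \<Longrightarrow> \<bar>x\<bar> \<le> M" "M \<ge> 0" using M0 by (auto simp: M_def)
  define B where "B = M + 1 + 1 / r'"
  have Bpos: "B > 0" using M assms(1) by (simp add: B_def add_pos_nonneg)
  define c where "c = B / (1 - r)"
  have r0: "0 < r" using assms by simp
  have cpos: "c > 0" using Bpos assms by (simp add: c_def)
  have geo: "summable (\<lambda>k. B * r ^ k)"
    using r0 assms(3) by (intro summable_mult summable_geometric) simp
  have geo': "summable (\<lambda>k. B * r' ^ k)"
    using assms by (intro summable_mult summable_geometric) simp
  have "x \<in> theta r' ` ZLaurent_ball r c" if xK: "x \<in> K" for x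
  proof -
    define d where "d = dig r' x"
    have dB: "\<bar>of_int (d k)\<bar> \<le> B" for k
    proof (cases "k = 0")
      case True
      have "0 < 1 / r'" using assms(1) by simp
      have f1: "real_of_int \<lfloor>x\<rfloor> \<le> x" "x < real_of_int \<lfloor>x\<rfloor> + 1" by linarith+
      have f: "\<bar>real_of_int \<lfloor>x\<rfloor>\<bar> \<le> M + 1" using M(1)[OF xK] f1 by linarith
      have "d k = \<lfloor>x\<rfloor>" using True by (simp add: d_def dig_def)
      then show ?thesis using f \<open>0 < 1 / r'\<close> unfolding B_def by linarith
    next
      case False
      then show ?thesis using dig_bound[OF assms(1), of k x] M(2) unfolding d_def B_def by simp
    qed
    define a :: "int \<Rightarrow> int" where "a n = (if n < 0 then 0 else d (nat n))" for n
    define g where "g k = real_of_int \<bar>d k\<bar> * r ^ k" for k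
    have gle: "norm (g k) \<le> B * r ^ k" for k
      using dB[of k] r0 unfolding g_def by (simp add: abs_mult mult_right_mono)
    have gs: "summable (\<lambda>k. norm (g k))"
      by (rule summable_comparison_test[OF _ geo]) (use gle in auto)
    have "(g has_sum suminf g) UNIV"
      by (rule norm_summable_imp_has_sum[OF gs]) (simp add: summable_sums summable_norm_cancel[OF gs])
    then have hs1: "((\<lambda>n. real_of_int \<bar>a n\<bar> * r powi n) has_sum suminf g) UNIV"
      by (intro has_sum_int_from_nat) (auto simp: a_def g_def[abs_def])
    have gle2: "g n \<le> B * r ^ n" for n using gle[of n] unfolding real_norm_def by linarith
    have "suminf g \<le> (\<Sum>k. B * r ^ k)"
      by (rule suminf_le[OF gle2 summable_norm_cancel[OF gs] geo])
    also have "\<dots> = c" using r0 assms(3) by (simp add: c_def suminf_mult divide_simps suminf_geometric)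
    finally have gc: "suminf g \<le> c" .
    have aZ: "a \<in> ZLaurent_ball r c"
      unfolding ZLaurent_ball_def int_laurent_def
      using hs1 gc by (auto simp: a_def has_sum_iff)
    define h where "h k = real_of_int (d k) * r' ^ k" for k
    have hle: "norm (h k) \<le> B * r' ^ k" for k
      using dB[of k] assms(1) unfolding h_def by (simp add: abs_mult mult_right_mono)
    have hs: "summable (\<lambda>k. norm (h k))"
      by (rule summable_comparison_test[OF _ geo']) (use hle in auto)
    let ?y = "x - of_int \<lfloor>x\<rfloor>"
    have "(\<lambda>n. r' ^ n * rem r' ?y n) \<longlonglongrightarrow> 0"
    proof (rule Lim_null_comparison)
      show "\<forall>\<^sub>F n in sequentially. norm (r' ^ n * rem r' ?y n) \<le> r' ^ n"
      proof (intro always_eventually allI)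
        fix n
        have "0 \<le> ?y" "?y < 1" by linarith+
        then have "0 \<le> rem r' ?y n" "rem r' ?y n < 1" using rem_bounds by blast+
        then show "norm (r' ^ n * rem r' ?y n) \<le> r' ^ n"
          using assms(1) by (simp add: abs_mult mult_left_le)
      qed
      show "(\<lambda>n. r' ^ n) \<longlonglongrightarrow> 0" using assms by (intro LIMSEQ_power_zero) simp_all
    qed
    then have "(\<lambda>n. x - r' ^ n * rem r' ?y n) \<longlonglongrightarrow> x - 0" by (intro tendsto_diff) auto
    moreover have "(\<Sum>k<Suc n. h k) = x - r' ^ n * rem r' ?y n" for n
      using dig_expand[OF assms(1), where n=n and x=x] unfolding h_def d_def by simp
    ultimately have "(\<lambda>n. \<Sum>k<Suc n. h k) \<longlonglongrightarrow> x" by simp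
    then have "h sums x" unfolding sums_def by (rule LIMSEQ_imp_Suc)
    then have "(h has_sum x) UNIV" by (rule norm_summable_imp_has_sum[OF hs])
    then have "((\<lambda>n. real_of_int (a n) * r' powi n) has_sum x) UNIV"
      by (intro has_sum_int_from_nat) (auto simp: a_def h_def[abs_def])
    then have "theta r' a = x" unfolding theta_def by (rule infsumI)
    then show ?thesis using aZ by force
  qed
  then show ?thesis using cpos by blast
qed

end
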